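(* Let $p=2$ and let $\chi=\mathfrak{Z}_5+2\mathfrak{Z}_{15}$, a character $U_1\to\mathbb{Z}/4\mathbb{Z}$ of type $\langle5,15\rangle$ in reduced form (so $\chi(E_{11})=0$). Then $\chi$ is strictly equivalent to a character $\psi$ in reduced form of type $\langle 5,15\rangle$, i.e. $\psi=\mathfrak{Z}_5+\sum_{10\le j\le15,\,j\text{ odd}}b_j\cdot 2\,\mathfrak{Z}_j$ with $b_j\in\{0,1\}$, $b_{15}=1$, such that $\psi(E_{11})=2$; in particular $\psi\neq\chi$, so the uniqueness of reduced forms in a strict equivalence class fails when $l\ge p$.
   Context: Here $p=2$, $U_1=1+t\mathbb{F}_2[[t]]$, $U_j=1+t^j\mathbb{F}_2[[t]]$, with the $t$-adic topology. The Nottingham group $\mathcal{N}$ over $\mathbb{F}_2$ is the set of power series $u(t)=t(1+c_1t+\cdots)$, $c_i\in\mathbb{F}_2$, under composition. A character is a continuous homomorphism $\chi:U_1\to\mathbb{Z}/4\mathbb{Z}$; $\mathcal{N}$ acts by ${}_u\chi(f(t))=\chi(f(u(t)))$. Characters $\chi,\psi$ are strictly equivalent if $\psi={}_u\chi$ for some $u\in\mathcal{N}$ with $\chi(u(t)/t)=0$. A surjective character has type $\langle l,m\rangle$ where $l$ is the largest $b$ with $\chi(U_b)\not\subset 2\mathbb{Z}/4\mathbb{Z}$ and $m$ the largest $b$ with $\chi(U_b)\ne0$. Put $E_j=1+t^j$; the $E_j$ with $j$ odd form a topological $\mathbb{Z}_2$-basis of $U_1$, and for odd $j$, $\mathfrak{Z}_j$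 is the character with $\mathfrak{Z}_j(E_i)=\delta_{ij}$ for all odd $i$. *)

theory Defs
  imports "HOL-Computational_Algebra.Formal_Power_Series" "HOL-Library.Z2" "HOL-Library.Numeral_Type"
begin

definition U :: "nat \<Rightarrow> bit fps set" where
  "U j = {f. fps_nth f 0 = 1 \<and> (\<forall>i. 0 < i \<and> i < j \<longrightarrow> fps_nth f i = 0)}"

abbreviation U1 :: "bit fps set" where "U1 \<equiv> U 1"

definition E :: "nat \<Rightarrow> bit fps" where
  "E j = 1 + fps_X ^ j"

text \<open>Continuous homomorphism U_1 -> Z/4Z (Z/4Z discrete, so continuity means the
  kernel contains some U_b); extended by 0 outside U_1 so that it is a unique function.\<close>
definition is_character :: "(bit fps \<Rightarrow> 4) \<Rightarrow> bool" where
  "is_character \<chi> \<longleftrightarrow>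
     (\<forall>f\<in>U1. \<forall>g\<in>U1. \<chi> (f * g) = \<chi> f + \<chi> g) \<and>
     (\<exists>b\<ge>1. \<forall>f\<in>U b. \<chi> f = 0) \<and>
     (\<forall>f. f \<notin> U1 \<longrightarrow> \<chi> f = 0)"

definition Zfrak :: "nat \<Rightarrow> bit fps \<Rightarrow> 4" where
  "Zfrak j = (THE \<chi>. is_character \<chi> \<and>
               (\<forall>i. odd i \<longrightarrow> \<chi> (E i) = (if i = j then 1 else 0)))"

definition nottingham :: "bit fps set" where
  "nottingham = {u. fps_nth u 0 = 0 \<and> fps_nth u 1 = 1}"

definition act :: "bit fps \<Rightarrow> (bit fps \<Rightarrow> 4) \<Rightarrow> bit fps \<Rightarrow> 4" where
  "act u \<chi> f = (if f \<in> U1 then \<chi> (f oo u) else 0)"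

definition strictly_equivalent :: "(bit fps \<Rightarrow> 4) \<Rightarrow> (bit fps \<Rightarrow> 4) \<Rightarrow> bool" where
  "strictly_equivalent \<chi> \<psi> \<longleftrightarrow>
     (\<exists>u\<in>nottingham. \<chi> (fps_shift 1 u) = 0 \<and> \<psi> = act u \<chi>)"

end

theory Submission
  imports Defs
begin
unbundle fps_syntax
declare add_bit_eq_xor[simp del] mult_bit_eq_and[simp del]


lemma bit_add_self[simp]: "(a::bit) + a = 0" by (cases a) simp_all

lemma fps_bit_add_self[simp]: "(f::bit fps) + f = 0"
  by (rule fps_ext) (simp only: fps_add_nth bit_add_self fps_zero_nth)

lemma U_mono: "m \<le> n \<Longrightarrow> U n \<subseteq> U m"
  unfolding U_def by auto

lemma U_nth0: "f \<in> U n \<Longrightarrow> f $ 0 = 1" unfolding U_def by auto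
lemma U_nth: "f \<in> U n \<Longrightarrow> 0 < i \<Longrightarrow> i < n \<Longrightarrow> f $ i = 0" unfolding U_def by auto

lemma U_mult_nth:
  assumes "f \<in> U n" "g \<in> U n" "0 < i" "i \<le> n"
  shows "(f * g) $ i = f $ i + g $ i"
proof -
  have "(f * g) $ i = (\<Sum>j=0..i. f$j * g$(i - j))" by (rule fps_mult_nth)
  also have "\<dots> = (\<Sum>j\<in>{0,i}. f$j * g$(i - j))"
  proof (rule sum.mono_neutral_right)
    show "\<forall>j\<in>{0..i} - {0, i}. f $ j * g $ (i - j) = 0"
      using assms by (auto simp: U_nth)
  qed auto
  also have "\<dots> = f $ i + g $ i" using assms by (subst sum.insert) (auto simp: U_nth0 add.commute)
  finally show ?thesis .
qed

lemma U_mult: assumes "f \<in> U n" "g \<in> U n" shows "f * g \<in> U n"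
  using assms U_mult_nth[OF assms] unfolding U_def by auto

lemma U_one[simp]: "1 \<in> U n" unfolding U_def by simp

lemma U_prod: "(\<And>i. i \<in> S \<Longrightarrow> F i \<in> U n) \<Longrightarrow> prod F S \<in> U n"
  by (induction S rule: infinite_finite_induct) (auto intro: U_mult)

lemma U_power: "f \<in> U n \<Longrightarrow> f ^ k \<in> U n"
  by (induction k) (auto intro: U_mult)

lemma E_nth: "E j $ i = (if i = 0 then 1 else 0) + (if i = j then 1 else 0)"
  by (simp add: E_def)

lemma E_U: "1 \<le> j \<Longrightarrow> E j \<in> U j" unfolding U_def E_def by auto

lemma E_U1: "1 \<le> j \<Longrightarrow> E j \<in> U1" using E_U U_mono by blast

lemma E_nth_self: "1 \<le> j \<Longrightarrow> E j $ j = 1" by (simp add: E_def)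

lemma E_double: "E j * E j = E (2*j)"
proof -
  have d: "(1 + a) * (1 + a) = 1 + (a + a) + a * a" for a :: "bit fps"
    by (simp only: distrib_left distrib_right mult_1_left mult_1_right add.assoc)
  have "E j * E j = 1 + (fps_X^j + fps_X^j) + fps_X^(2*j)"
    unfolding E_def d by (simp add: power_add[symmetric] mult_2)
  then show ?thesis by (simp add: E_def)
qed

lemma E_pow2: "E j ^ (2^k) = E (j * 2^k)"
proof (induction k)
  case (Suc k)
  have "E j ^ (2^Suc k) = E j ^ (2^k * 2)" by (simp add: mult.commute)
  also have "\<dots> = (E j ^ (2^k)) * (E j ^ (2^k))"
    by (simp only: power_mult power2_eq_square)
  also have "\<dots> = E (2 * (j*2^k))" using Suc by (simp add: E_double)
  finally show ?case by (simp add: ac_simps)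
qed simp

lemma E_power_nth:
  assumes "1 \<le> n" shows "E n ^ w \<in> U n \<and> (E n ^ w) $ n = of_nat w"
proof (induction w)
  case (Suc w)
  have "(E n ^ Suc w) $ n = (E n * E n ^ w) $ n" by simp
  also have "\<dots> = E n $ n + (E n ^ w) $ n"
    using Suc assms by (intro U_mult_nth) (auto simp: E_U)
  finally show ?case using Suc assms by (auto simp: E_nth_self E_U intro: U_mult)
qed (use assms in auto)

lemma of_nat_bit_odd: "odd w \<Longrightarrow> (of_nat w :: bit) = 1"
  by (auto elim!: oddE)

lemma cong_inverse_U:
  assumes f0: "f $ 0 = 1" and g0: "g $ 0 = 1" and eq: "\<And>i. i < n \<Longrightarrow> g $ i = f $ i"
  shows "g * inverse f \<in> U n"
proof -
  have inv: "f * inverse f = 1" using f0 by (intro inverse_mult_eq_1') simp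
  have "g * inverse f - 1 = (g - f) * inverse f" using inv by (simp add: algebra_simps)
  moreover have "((g - f) * inverse f) $ i = 0" if "i < n" for i
    unfolding fps_mult_nth using that eq by (intro sum.neutral) auto
  ultimately have "(g * inverse f) $ i = 0" if "0 < i" "i < n" for i
    using that by (metis (no_types, lifting) diff_add_cancel fps_add_nth fps_one_nth not_gr_zero add_0)
  moreover have "(g * inverse f) $ 0 = 1" using f0 g0 by (simp add: fps_inverse_def)
  ultimately show ?thesis unfolding U_def by auto
qed

lemma inverse_cancel: "f $ 0 = 1 \<Longrightarrow> g * inverse f * f = (g :: bit fps)"
  by (simp add: mult.assoc inverse_mult_eq_1)



lemma odd_decomp: "1 \<le> (n::nat) \<Longrightarrow> \<exists>j k. odd j \<and> n = j * 2^k"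
proof (induction n rule: less_induct)
  case (less n)
  show ?case
  proof (cases "odd n")
    case True then show ?thesis by (intro exI[of _ n] exI[of _ 0]) auto
  next
    case False
    then obtain m where m: "n = 2*m" by (auto elim: evenE)
    with less have "1 \<le> m" "m < n" by auto
    with less obtain j k where "odd j" "m = j*2^k" by blast
    then show ?thesis using m by (intro exI[of _ j] exI[of _ "Suc k"]) auto
  qed
qed

lemma odd_decomp_unique_aux:
  fixes j j' :: nat
  assumes "odd j" "odd j'" "j * 2^k = j' * 2^k'" "k \<le> k'" shows "j = j' \<and> k = k'"
proof -
  obtain d where d: "k' = k + d" using assms(4) le_Suc_ex by blast
  have "j * 2^k = (j' * 2^d) * 2^k" using assms(3) d by (simp add: power_add ac_simps)
  then have "j = j' * 2^d" by simp
  with assms(1) have "d = 0" by (cases d) auto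
  then show ?thesis using \<open>j = j' * 2^d\<close> d by simp
qed

lemma odd_decomp_unique:
  fixes j j' :: nat
  assumes "odd j" "odd j'" "j * 2^k = j' * 2^k'" shows "j = j' \<and> k = k'"
  using odd_decomp_unique_aux[OF assms] odd_decomp_unique_aux[OF assms(2,1) assms(3)[symmetric]]
  by (cases "k \<le> k'") auto

definition Od :: "nat \<Rightarrow> nat set" where "Od b = {j. odd j \<and> j < b}"

lemma finite_Od[simp]: "finite (Od b)" unfolding Od_def by auto

definition P :: "nat \<Rightarrow> (nat \<Rightarrow> nat) \<Rightarrow> bit fps" where
  "P b a = (\<Prod>j\<in>Od b. E j ^ a j)"

lemma P_add: "P b (\<lambda>j. a j + c j) = P b a * P b c"
  unfolding P_def by (simp add: power_add prod.distrib)

lemma P_zero: "P b (\<lambda>j. 0) = 1" unfolding P_def by simp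

lemma P_delta: "j \<in> Od b \<Longrightarrow> P b (\<lambda>i. if i = j then c else 0) = E j ^ c"
proof -
  assume j: "j \<in> Od b"
  have "P b (\<lambda>i. if i = j then c else 0) = (\<Prod>i\<in>Od b. if i = j then E j ^ c else 1)"
    unfolding P_def by (intro prod.cong) auto
  also have "\<dots> = E j ^ c" using j by (simp add: prod.delta)
  finally show ?thesis .
qed

lemma Od_ge1: "j \<in> Od b \<Longrightarrow> 1 \<le> j" unfolding Od_def by (cases j) auto

lemma P_U1: "P b a \<in> U1"
  unfolding P_def by (intro U_prod U_power E_U1) (auto dest: Od_ge1)

lemma P_exists:
  assumes f: "f \<in> U1" and "1 \<le> m" "m \<le> b"
  shows "\<exists>a h. h \<in> U m \<and> f = P b a * h"
  using assms(2,3)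
proof (induction m rule: dec_induct)
  case base
  show ?case using f by (intro exI[of _ "\<lambda>j. 0"] exI[of _ f]) (simp add: P_zero)
next
  case (step n)
  then obtain a h where h: "h \<in> U n" and fa: "f = P b a * h" by auto
  show ?case
  proof (cases "h $ n = 0")
    case True
    then have "h \<in> U (Suc n)" using h unfolding U_def by (auto simp: less_Suc_eq)
    then show ?thesis using fa by blast
  next
    case False
    then have hm: "h $ n = 1" by simp
    have E0: "E n $ 0 = 1" using step by (simp add: E_def)
    define h' where "h' = h * inverse (E n)"
    have h'U: "h' \<in> U (Suc n)" unfolding h'_def
    proof (rule cong_inverse_U[OF E0])
      show "h $ 0 = 1" using h by (rule U_nth0)
      fix i assume "i < Suc n"
      then show "h $ i = E n $ i" using h hm step
        by (cases "i = 0"; cases "i = n") (auto simp: E_nth U_nth0 U_nth)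
    qed
    have hh: "h = h' * E n" unfolding h'_def using E0 by (simp add: inverse_cancel)
    obtain j k where jk: "odd j" "n = j * 2^k" using odd_decomp step by blast
    have "j \<le> n" using jk(2) by simp
    moreover have "n < b" using step by simp
    ultimately have jO: "j \<in> Od b" using jk(1) unfolding Od_def by simp
    define a' where "a' = (\<lambda>i. a i + (if i = j then 2^k else 0))"
    have "P b a' = P b a * E n"
      unfolding a'_def P_add P_delta[OF jO] jk E_pow2 ..
    then have "f = P b a' * h'" using fa hh by (simp add: ac_simps)
    then show ?thesis using h'U by blast
  qed
qed



lemma factor_U:
  assumes jO: "j \<in> Od b" and m1: "1 \<le> m" and mb: "m < b"
    and minm: "\<And>k w. odd w \<Longrightarrow> c = 2^k * w \<Longrightarrow> m \<le> j * 2^k"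
    and ne: "\<And>k w. odd w \<Longrightarrow> c = 2^k * w \<Longrightarrow> j * 2^k \<noteq> m"
  shows "E j ^ c \<in> U (Suc m)"
proof (cases "c = 0")
  case True then show ?thesis by simp
next
  case False
  then obtain w k where wk: "odd w" "c = w * 2^k" using odd_decomp[of c] by auto
  have j1: "1 \<le> j" using jO by (rule Od_ge1)
  have "E j ^ c = (E j ^ 2^k) ^ w" using wk by (simp add: power_mult[symmetric] ac_simps)
  also have "\<dots> = E (j * 2^k) ^ w" by (simp add: E_pow2)
  finally have eq: "E j ^ c = E (j * 2^k) ^ w" .
  have "m < j * 2^k" using minm[of w k] ne[of w k] wk by (auto simp: ac_simps)
  moreover have "E (j * 2^k) ^ w \<in> U (j * 2^k)" using E_power_nth[of "j*2^k" w] j1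
    by (simp add: Suc_le_eq)
  ultimately show ?thesis using eq U_mono[of "Suc m" "j*2^k"] by auto
qed

lemma P_lead_core:
  assumes eq: "P b x * h = P b y * h'" and hU: "h \<in> U b" "h' \<in> U b"
    and disj: "\<And>j. x j = 0 \<or> y j = 0"
    and m1: "1 \<le> m" and mb: "m < b"
    and minm: "\<And>j k w. j \<in> Od b \<Longrightarrow> odd w \<Longrightarrow> x j = 2^k * w \<or> y j = 2^k * w \<Longrightarrow> m \<le> j*2^k"
    and j0: "j0 \<in> Od b" "odd w0" "x j0 = 2^k0 * w0" "m = j0 * 2^k0"
  shows False
proof -
  have oddj: "odd j" if "j \<in> Od b" for j using that unfolding Od_def by auto
  have ne: "j * 2^k \<noteq> m" if "j \<in> Od b" "j \<noteq> j0" for j k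
    using odd_decomp_unique[of j j0 k k0] that oddj j0 by auto
  have x0: "x j0 \<noteq> 0" using j0 by (auto dest: odd_pos)
  have Fx: "E j ^ x j \<in> U (Suc m)" if "j \<in> Od b - {j0}" for j
  proof -
    from that have jj: "j \<in> Od b" "j \<noteq> j0" by auto
    show ?thesis by (rule factor_U[OF jj(1) m1 mb]) (auto intro: minm[OF jj(1)] simp: ne[OF jj])
  qed
  have Fy: "E j ^ y j \<in> U (Suc m)" if "j \<in> Od b" for j
  proof (cases "j = j0")
    case True then show ?thesis using disj[of j0] x0 by simp
  next
    case False
    show ?thesis by (rule factor_U[OF that m1 mb]) (auto intro: minm[OF that] simp: ne[OF that False])
  qed
  have j1: "1 \<le> j0" using j0(1) by (rule Od_ge1)
  have A: "E j0 ^ x j0 = E m ^ w0"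
  proof -
    have "E j0 ^ x j0 = (E j0 ^ 2^k0) ^ w0" by (simp add: j0(3) power_mult)
    then show ?thesis by (simp add: E_pow2 j0(4))
  qed
  have AU: "E m ^ w0 \<in> U m" "(E m ^ w0) $ m = 1"
    using E_power_nth[OF m1, of w0] j0 by (auto simp: of_nat_bit_odd)
  have RU: "(\<Prod>j\<in>Od b - {j0}. E j ^ x j) \<in> U (Suc m)" by (intro U_prod Fx)
  have Px: "P b x = E m ^ w0 * (\<Prod>j\<in>Od b - {j0}. E j ^ x j)"
    unfolding P_def A[symmetric] using j0(1) by (simp add: prod.remove)
  have RU': "(\<Prod>j\<in>Od b - {j0}. E j ^ x j) \<in> U m" using RU U_mono[of m "Suc m"] by auto
  have PxU: "P b x \<in> U m" unfolding Px using AU RU' by (intro U_mult)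
  have "(P b x) $ m = 1 + (\<Prod>j\<in>Od b - {j0}. E j ^ x j) $ m"
    unfolding Px using AU RU' m1 by (subst U_mult_nth[of _ m]) auto
  also have "(\<Prod>j\<in>Od b - {j0}. E j ^ x j) $ m = 0" using RU m1 by (intro U_nth) auto
  finally have Pxm: "(P b x) $ m = 1" by simp
  have PyU: "P b y \<in> U (Suc m)" unfolding P_def by (intro U_prod Fy)
  have PyU': "P b y \<in> U m" using PyU U_mono[of m "Suc m"] by auto
  have hm: "h \<in> U m" "h' \<in> U m" using hU mb U_mono[of m b] by auto
  have h0: "h $ m = 0" "h' $ m = 0" using hU mb m1 by (auto intro: U_nth)
  have "(P b x * h) $ m = 1" using U_mult_nth[OF PxU hm(1)] m1 Pxm h0 by simp
  moreover have "(P b y * h') $ m = 0"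
    using U_mult_nth[OF PyU' hm(2)] m1 h0 U_nth[OF PyU, of m] by simp
  ultimately show False using eq by simp
qed

lemma P_lead:
  assumes eq: "P b x * h = P b y * h'" and hU: "h \<in> U b" "h' \<in> U b"
    and disj: "\<And>j. x j = 0 \<or> y j = 0"
    and j: "j \<in> Od b" "odd w" "x j = 2^k * w"
  shows "b \<le> j * 2^k"
proof (rule ccontr)
  assume "\<not> b \<le> j * 2^k"
  define V where "V = {n. \<exists>j k w. j \<in> Od b \<and> odd w \<and> (x j = 2^k * w \<or> y j = 2^k * w) \<and> n = j*2^k}"
  have "j * 2^k \<in> V" unfolding V_def using j by blast
  define m where "m = (LEAST n. n \<in> V)"
  have mV: "m \<in> V" unfolding m_def by (rule LeastI) fact
  have mle: "m \<le> j*2^k" unfolding m_def by (rule Least_le) fact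
  have mb: "m < b" using mle \<open>\<not> b \<le> j * 2^k\<close> by simp
  have minm: "m \<le> j'*2^k'" if "j' \<in> Od b" "odd w'" "x j' = 2^k' * w' \<or> y j' = 2^k' * w'" for j' k' w'
    unfolding m_def by (rule Least_le) (use that in \<open>auto simp: V_def\<close>)
  from mV obtain j0 k0 w0 where j0: "j0 \<in> Od b" "odd w0" "x j0 = 2^k0 * w0 \<or> y j0 = 2^k0 * w0" "m = j0*2^k0"
    unfolding V_def by blast
  have m1: "1 \<le> m" using j0 Od_ge1[of j0 b] by (simp add: j0(4))
  show False
  proof (cases "x j0 = 2^k0 * w0")
    case True
    show False by (rule P_lead_core[OF eq hU disj m1 mb minm j0(1,2) True j0(4)]) auto
  next
    case False
    then have y: "y j0 = 2^k0 * w0" using j0 by auto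
    have disj': "y j = 0 \<or> x j = 0" for j by (metis disj)
    have minm': "m \<le> j'*2^k'" if "j' \<in> Od b" "odd w'" "y j' = 2^k' * w' \<or> x j' = 2^k' * w'" for j' k' w'
      using minm that by blast
    show False by (rule P_lead_core[OF eq[symmetric] hU(2,1) disj' m1 mb minm' j0(1,2) y j0(4)])
  qed
qed



lemma four_dvd_of_nat: assumes "4 dvd n" shows "(of_nat n :: 4) = 0"
proof -
  have "(4::4) = 0" by simp
  from assms obtain k where "n = 4 * k" by (auto elim!: dvdE)
  then have "(of_nat n :: 4) = 4 * of_nat k" by simp
  then show "(of_nat n :: 4) = 0" using \<open>(4::4) = 0\<close> by simp
qed

lemma P_eq_mod:
  assumes eq: "P b a * h = P b a' * h'" and hU: "h \<in> U b" "h' \<in> U b"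
    and j: "j \<in> Od b" "2 * j < b"
  shows "(of_nat (a j) :: 4) = of_nat (a' j)"
proof -
  define c where "c = (\<lambda>i. min (a i) (a' i))"
  define x where "x = (\<lambda>i. a i - c i)"
  define y where "y = (\<lambda>i. a' i - c i)"
  have ax: "a = (\<lambda>i. c i + x i)" "a' = (\<lambda>i. c i + y i)" unfolding c_def x_def y_def by auto
  have "P b c * (P b x * h) = P b c * (P b y * h')"
    using eq unfolding ax P_add by (simp add: ac_simps)
  moreover have "P b c \<noteq> 0" using P_U1[of b c] U_nth0 by force
  ultimately have eq': "P b x * h = P b y * h'" by simp
  have disj: "\<And>i. x i = 0 \<or> y i = 0" unfolding x_def y_def c_def by auto
  have "4 dvd x j"
  proof (cases "x j = 0")
    case False
    then obtain w k where wk: "odd w" "x j = w * 2^k" using odd_decomp[of "x j"] by auto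
    have "b \<le> j * 2^k" using P_lead[OF eq' hU disj j(1) wk(1)] wk by (simp add: ac_simps)
    then have "\<not> k \<le> 1" using j(2) by (cases "k = 0") (auto simp: le_Suc_eq)
    then have "k = (k - 2) + 2" by simp
    then have "4 dvd (2::nat)^k" by (metis dvd_triv_right power_add power2_eq_square numeral_Bit0 mult_2_right)
    then show ?thesis using wk by simp
  qed simp
  moreover have "4 dvd y j"
  proof (cases "y j = 0")
    case False
    have disj': "y i = 0 \<or> x i = 0" for i by (metis disj)
    obtain w k where wk: "odd w" "y j = w * 2^k" using odd_decomp[of "y j"] False by auto
    have "b \<le> j * 2^k" using P_lead[OF eq'[symmetric] hU(2,1) disj' j(1) wk(1)] wk by (simp add: ac_simps)
    then have "\<not> k \<le> 1" using j(2) by (cases "k = 0") (auto simp: le_Suc_eq)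
    then have "k = (k - 2) + 2" by simp
    then have "4 dvd (2::nat)^k" by (metis dvd_triv_right power_add power2_eq_square numeral_Bit0 mult_2_right)
    then show ?thesis using wk by simp
  qed simp
  ultimately show ?thesis by (simp add: ax four_dvd_of_nat)
qed



definition zch :: "nat \<Rightarrow> bit fps \<Rightarrow> 4" where
  "zch j0 f = (if f \<in> U1 then of_nat ((SOME a. \<exists>h\<in>U (4*j0). f = P (4*j0) a * h) j0) else 0)"

lemma U_U1: "1 \<le> b \<Longrightarrow> h \<in> U b \<Longrightarrow> h \<in> U1" using U_mono[of 1 b] by auto

lemma zch_eq:
  assumes j0: "odd j0" and h: "h \<in> U (4*j0)"
  shows "zch j0 (P (4*j0) a * h) = of_nat (a j0)"
proof -
  define b where "b = 4 * j0"
  have b1: "1 \<le> b" using j0 unfolding b_def by (cases j0) auto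
  have hb: "h \<in> U b" using h b_def by simp
  have f1: "P b a * h \<in> U1" using P_U1 U_U1[OF b1 hb] by (rule U_mult)
  have ex: "\<exists>a'. \<exists>h'\<in>U b. P b a * h = P b a' * h'" using hb by blast
  define a' where "a' = (SOME a'. \<exists>h'\<in>U b. P b a * h = P b a' * h')"
  obtain h' where h': "h' \<in> U b" "P b a * h = P b a' * h'"
    using someI_ex[OF ex] unfolding a'_def by blast
  have jO: "j0 \<in> Od b" "2 * j0 < b" using j0 unfolding Od_def b_def by (cases j0; auto)+
  have "zch j0 (P b a * h) = of_nat (a' j0)" using f1 unfolding zch_def a'_def b_def by simp
  also have "\<dots> = of_nat (a j0)" using P_eq_mod[OF h'(2) hb h'(1) jO] by simp
  finally show ?thesis unfolding b_def .
qed

lemma zch_decomp: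
  assumes j0: "odd j0" and f: "f \<in> U1"
  obtains a h where "h \<in> U (4*j0)" "f = P (4*j0) a * h"
proof -
  have "1 \<le> 4 * j0" using j0 by (cases j0) auto
  then show ?thesis using P_exists[OF f, of "4*j0" "4*j0"] that by auto
qed

lemma zch_char: assumes j0: "odd j0" shows "is_character (zch j0)"
  unfolding is_character_def
proof (intro conjI ballI allI impI)
  fix f g assume f: "f \<in> U1" and g: "g \<in> U1"
  obtain a h where ah: "h \<in> U (4*j0)" "f = P (4*j0) a * h" using zch_decomp[OF j0 f] .
  obtain a' h' where ah': "h' \<in> U (4*j0)" "g = P (4*j0) a' * h'" using zch_decomp[OF j0 g] .
  have "f * g = P (4*j0) (\<lambda>j. a j + a' j) * (h * h')" using ah ah' by (simp add: P_add ac_simps)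
  moreover have "h * h' \<in> U (4*j0)" using ah ah' by (intro U_mult)
  ultimately have "zch j0 (f * g) = of_nat (a j0 + a' j0)" using zch_eq[OF j0] by simp
  then show "zch j0 (f * g) = zch j0 f + zch j0 g" using ah ah' zch_eq[OF j0] by simp
next
  show "\<exists>b\<ge>1. \<forall>f\<in>U b. zch j0 f = 0"
  proof (intro exI[of _ "4*j0"] conjI ballI)
    show "1 \<le> 4 * j0" using j0 by (cases j0) auto
    fix f assume "f \<in> U (4*j0)"
    then show "zch j0 f = 0" using zch_eq[OF j0, of f "\<lambda>j. 0"] by (simp add: P_zero)
  qed
next
  fix f assume "f \<notin> U1" then show "zch j0 f = 0" unfolding zch_def by simp
qed

lemma zch_E:
  assumes j0: "odd j0" and i: "odd i"
  shows "zch j0 (E i) = (if i = j0 then 1 else 0)"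
proof (cases "i < 4 * j0")
  case True
  then have iO: "i \<in> Od (4*j0)" using i unfolding Od_def by simp
  have "E i = P (4*j0) (\<lambda>k. if k = i then 1 else 0) * 1" using P_delta[OF iO, of 1] by simp
  then have "zch j0 (E i) = of_nat (if j0 = i then 1 else 0)"
    using zch_eq[OF j0 U_one, of "\<lambda>k. if k = i then 1 else 0"] by simp
  then show ?thesis by auto
next
  case False
  have i1: "1 \<le> i" using i by (cases i) auto
  have "E i \<in> U (4*j0)" using E_U[OF i1] U_mono[of "4*j0" i] False by auto
  then have "zch j0 (E i) = 0" using zch_eq[OF j0, of "E i" "\<lambda>j. 0"] by (simp add: P_zero)
  moreover have "i \<noteq> j0" using False j0 by (cases j0) auto
  ultimately show ?thesis by simp
qed

lemma char_mult: "is_character \<chi> \<Longrightarrow> f \<in> U1 \<Longrightarrow> g \<in> U1 \<Longrightarrow> \<chi> (f * g) = \<chi> f + \<chi> g"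
  unfolding is_character_def by blast

lemma char_out: "is_character \<chi> \<Longrightarrow> f \<notin> U1 \<Longrightarrow> \<chi> f = 0"
  unfolding is_character_def by blast

lemma char_one: "is_character \<chi> \<Longrightarrow> \<chi> 1 = 0"
  using char_mult[of \<chi> 1 1] by simp

lemma char_E_double: "is_character \<chi> \<Longrightarrow> 1 \<le> n \<Longrightarrow> \<chi> (E (2*n)) = \<chi> (E n) + \<chi> (E n)"
  using char_mult[of \<chi> "E n" "E n"] E_U1[of n] by (simp add: E_double)

lemma char_E_pow2:
  assumes "is_character \<chi>" "1 \<le> j" shows "\<chi> (E (j * 2^k)) = of_nat (2^k) * \<chi> (E j)"
proof (induction k)
  case (Suc k)
  have "j * 2^Suc k = 2 * (j * 2^k)" by simp
  then have "\<chi> (E (j * 2^Suc k)) = \<chi> (E (2 * (j * 2^k)))" by (simp only:)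
  also have "\<dots> = \<chi> (E (j * 2^k)) + \<chi> (E (j*2^k))"
    using char_E_double[OF assms(1), of "j*2^k"] assms(2) by simp
  finally have "\<chi> (E (j * 2^Suc k)) = \<chi> (E (j * 2^k)) + \<chi> (E (j*2^k))" .
  then show ?case using Suc by (simp add: algebra_simps)
qed simp

lemma char_kill:
  assumes chi: "is_character \<chi>" and m1: "1 \<le> m" and z: "\<And>n. m \<le> n \<Longrightarrow> \<chi> (E n) = 0"
  shows "\<forall>f\<in>U m. \<chi> f = 0"
proof -
  obtain B where B: "B \<ge> 1" "\<forall>f\<in>U B. \<chi> f = 0" using chi unfolding is_character_def by blast
  have "m \<le> max B m" by simp
  then show ?thesis
  proof (induction m rule: inc_induct)
    case base
    show ?case using B U_mono[of B "max B m"] by auto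
  next
    case (step n)
    show ?case
    proof
      fix f assume f: "f \<in> U n"
      have n1: "1 \<le> n" using step m1 by simp
      show "\<chi> f = 0"
      proof (cases "f $ n = 0")
        case True
        then have "f \<in> U (Suc n)" using f unfolding U_def by (auto simp: less_Suc_eq)
        then show ?thesis using step by blast
      next
        case False
        then have fn: "f $ n = 1" by simp
        have E0: "E n $ 0 = 1" using n1 by (simp add: E_def)
        define f' where "f' = f * inverse (E n)"
        have f'U: "f' \<in> U (Suc n)" unfolding f'_def
        proof (rule cong_inverse_U[OF E0])
          show "f $ 0 = 1" using f by (rule U_nth0)
          fix i assume "i < Suc n"
          then show "f $ i = E n $ i" using f fn n1
            by (cases "i = 0"; cases "i = n") (auto simp: E_nth U_nth0 U_nth)
        qed
        have ff: "f = f' * E n" unfolding f'_def using E0 by (simp add: inverse_cancel)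
        have "\<chi> f = \<chi> f' + \<chi> (E n)"
          unfolding ff using f'U by (intro char_mult[OF chi] U_U1[of "Suc n"] E_U1 n1) auto
        also have "\<dots> = 0" using step f'U z[of n] by auto
        finally show ?thesis .
      qed
    qed
  qed
qed

lemma char_add: "is_character \<chi> \<Longrightarrow> is_character \<psi> \<Longrightarrow> is_character (\<lambda>f. \<chi> f + \<psi> f)"
  unfolding is_character_def
proof (intro conjI)
  assume a: "(\<forall>f\<in>U1. \<forall>g\<in>U1. \<chi> (f * g) = \<chi> f + \<chi> g) \<and> (\<exists>b\<ge>1. \<forall>f\<in>U b. \<chi> f = 0) \<and> (\<forall>f. f \<notin> U1 \<longrightarrow> \<chi> f = 0)"
     and b: "(\<forall>f\<in>U1. \<forall>g\<in>U1. \<psi> (f * g) = \<psi> f + \<psi> g) \<and> (\<exists>b\<ge>1. \<forall>f\<in>U b. \<psi> f = 0) \<and> (\<forall>f. f \<notin> U1 \<longrightarrow> \<psi> f = 0)"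
  then show "\<forall>f\<in>U1. \<forall>g\<in>U1. \<chi> (f * g) + \<psi> (f * g) = \<chi> f + \<psi> f + (\<chi> g + \<psi> g)"
    by (simp add: ac_simps)
  from a obtain b1 where b1: "b1 \<ge> 1" "\<forall>f\<in>U b1. \<chi> f = 0" by blast
  from b obtain b2 where b2: "b2 \<ge> 1" "\<forall>f\<in>U b2. \<psi> f = 0" by blast
  show "\<exists>b\<ge>1. \<forall>f\<in>U b. \<chi> f + \<psi> f = 0"
  proof (intro exI[of _ "max b1 b2"] conjI ballI)
    show "1 \<le> max b1 b2" using b1 by simp
    fix f assume "f \<in> U (max b1 b2)"
    then have "f \<in> U b1" "f \<in> U b2" using U_mono[of b1 "max b1 b2"] U_mono[of b2 "max b1 b2"] by auto
    then show "\<chi> f + \<psi> f = 0" using b1 b2 by simp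
  qed
  show "\<forall>f. f \<notin> U1 \<longrightarrow> \<chi> f + \<psi> f = 0" using a b by simp
qed

lemma char_smult: "is_character \<chi> \<Longrightarrow> is_character (\<lambda>f. c * \<chi> f)"
  unfolding is_character_def by (auto simp: algebra_simps)

lemma char_neg: "is_character \<chi> \<Longrightarrow> is_character (\<lambda>f. - \<chi> f)"
  using char_smult[of \<chi> "-1"] by simp

lemma char_unique:
  assumes chi: "is_character \<chi>" and psi: "is_character \<psi>"
    and eq: "\<And>i. odd i \<Longrightarrow> \<chi> (E i) = \<psi> (E i)"
  shows "\<chi> = \<psi>"
proof -
  define d where "d = (\<lambda>f. \<chi> f + - \<psi> f)"
  have dc: "is_character d" unfolding d_def by (intro char_add chi char_neg psi)
  have "d (E n) = 0" if n1: "1 \<le> n" for n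
  proof -
    obtain j k where jk: "odd j" "n = j * 2^k" using odd_decomp[OF n1] by blast
    have j1: "1 \<le> j" using jk by (cases j) auto
    show ?thesis using char_E_pow2[OF dc j1, of k] jk eq[of j] unfolding d_def by simp
  qed
  then have "\<forall>f\<in>U1. d f = 0" by (intro char_kill[OF dc]) auto
  then have "\<chi> f = \<psi> f" for f
    using char_out[OF chi, of f] char_out[OF psi, of f] unfolding d_def
    by (cases "f \<in> U1") (auto simp: algebra_simps)
  then show ?thesis by auto
qed

lemma Zfrak_prop:
  assumes j: "odd j"
  shows "is_character (Zfrak j) \<and> (\<forall>i. odd i \<longrightarrow> Zfrak j (E i) = (if i = j then 1 else 0))"
  unfolding Zfrak_def
proof (rule theI[of _ "zch j"])
  show "is_character (zch j) \<and> (\<forall>i. odd i \<longrightarrow> zch j (E i) = (if i = j then 1 else 0))"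
    using zch_char[OF j] zch_E[OF j] by auto
next
  fix \<chi> assume "is_character \<chi> \<and> (\<forall>i. odd i \<longrightarrow> \<chi> (E i) = (if i = j then 1 else 0))"
  then show "\<chi> = zch j" using zch_char[OF j] zch_E[OF j] by (intro char_unique) auto
qed



definition tr :: "nat \<Rightarrow> bit fps \<Rightarrow> bit list" where
  "tr n f = map (\<lambda>k. f $ k) [0..<n]"

definition tmul :: "bit list \<Rightarrow> bit list \<Rightarrow> bit list" where
  "tmul xs ys = map (\<lambda>k. \<Sum>j\<leftarrow>[0..<Suc k]. xs!j * ys!(k-j)) [0..<length xs]"

definition tadd :: "bit list \<Rightarrow> bit list \<Rightarrow> bit list" where
  "tadd xs ys = map (\<lambda>k. xs!k + ys!k) [0..<length xs]"

definition tM :: "nat \<Rightarrow> nat \<Rightarrow> bit list" where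
  "tM n i = map (\<lambda>k. if k = i then 1 else 0) [0..<n]"

fun tpow :: "bit list \<Rightarrow> nat \<Rightarrow> bit list" where
  "tpow xs 0 = tM (length xs) 0"
| "tpow xs (Suc m) = tmul xs (tpow xs m)"

lemma length_tr[simp]: "length (tr n f) = n" by (simp add: tr_def)
lemma nth_tr[simp]: "k < n \<Longrightarrow> tr n f ! k = f $ k" by (simp add: tr_def)

lemma tr_eq_iff: "tr n f = tr n g \<longleftrightarrow> (\<forall>k<n. f $ k = g $ k)"
  by (auto simp: tr_def)

lemma tr_mult: "tr n (f * g) = tmul (tr n f) (tr n g)"
proof (rule nth_equalityI)
  show "length (tr n (f * g)) = length (tmul (tr n f) (tr n g))" by (simp add: tmul_def)
  fix k assume "k < length (tr n (f * g))"
  then have k: "k < n" by simp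
  have "tmul (tr n f) (tr n g) ! k = (\<Sum>j\<leftarrow>[0..<Suc k]. tr n f ! j * tr n g ! (k - j))"
    using k by (simp add: tmul_def)
  also have "\<dots> = (\<Sum>j\<leftarrow>[0..<Suc k]. f $ j * g $ (k - j))"
    using k by (intro arg_cong[where f=sum_list] map_cong) auto
  also have "\<dots> = (\<Sum>j=0..<Suc k. f $ j * g $ (k - j))" by (simp add: sum_list_distinct_conv_sum_set)
  also have "\<dots> = (f * g) $ k" by (simp add: fps_mult_nth atLeastLessThanSuc_atLeastAtMost)
  finally show "tr n (f * g) ! k = tmul (tr n f) (tr n g) ! k" using k by simp
qed

lemma tr_add: "tr n (f + g) = tadd (tr n f) (tr n g)"
  by (rule nth_equalityI) (auto simp: tadd_def)

lemma tr_X_power: "tr n (fps_X ^ i) = tM n i"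
  by (rule nth_equalityI) (auto simp: tM_def)

lemma tr_X: "tr n fps_X = tM n 1"
  by (rule nth_equalityI) (auto simp: tM_def fps_X_def)

lemma tr_one: "tr n 1 = tM n 0"
  by (rule nth_equalityI) (auto simp: tM_def)

lemma tr_power: "tr n (f ^ m) = tpow (tr n f) m"
  by (induction m) (simp_all add: tr_mult tr_one)

lemma E_X: "E j = 1 + fps_X ^ j" by (simp add: E_def)

lemmas tr_simps = tr_mult tr_add tr_X tr_one tr_power E_X

definition uu :: "bit fps" where
  "uu = fps_X + fps_X^4 + fps_X^5 + fps_X^8 + fps_X^15"

lemma tr_uu: "tr 16 uu = [0,1,0,0,1,1,0,0,1,0,0,0,0,0,0,1]"
  unfolding uu_def
  apply (simp only: tr_simps)
  by code_simp



lemma compose_U: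
  assumes u0: "u $ 0 = 0" and f: "f \<in> U n"
  shows "f oo u \<in> U n"
  unfolding U_def
proof (intro CollectI conjI allI impI)
  show "(f oo u) $ 0 = 1" using f by (simp add: U_nth0)
  fix i assume i: "0 < i \<and> i < n"
  have "(f oo u) $ i = (\<Sum>k=0..i. f $ k * (u ^ k $ i))" by (rule fps_compose_nth)
  also have "\<dots> = 0"
  proof (rule sum.neutral, rule ballI)
    fix k assume k: "k \<in> {0..i}"
    show "f $ k * (u ^ k $ i) = 0"
    proof (cases "k = 0")
      case True then show ?thesis using i by simp
    next
      case False then show ?thesis using k i f by (simp add: U_nth)
    qed
  qed
  finally show "(f oo u) $ i = 0" .
qed

lemma act_char:
  assumes u: "u \<in> nottingham" and chi: "is_character \<chi>"
  shows "is_character (act u \<chi>)"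
proof -
  have u0: "u $ 0 = 0" using u unfolding nottingham_def by simp
  obtain b where b: "b \<ge> 1" "\<forall>f\<in>U b. \<chi> f = 0" using chi unfolding is_character_def by blast
  show ?thesis
    unfolding is_character_def
  proof (intro conjI ballI allI impI)
    fix f g assume f: "f \<in> U1" and g: "g \<in> U1"
    have fg: "f * g \<in> U1" using f g by (rule U_mult)
    show "act u \<chi> (f * g) = act u \<chi> f + act u \<chi> g"
      using f g fg compose_U[OF u0 f] compose_U[OF u0 g]
      by (simp add: act_def fps_compose_mult_distrib[OF u0] char_mult[OF chi])
  next
    show "\<exists>b\<ge>1. \<forall>f\<in>U b. act u \<chi> f = 0"
    proof (intro exI[of _ b] conjI ballI)
      show "1 \<le> b" by fact
      fix f assume f: "f \<in> U b"
      then show "act u \<chi> f = 0" using b compose_U[OF u0 f] U_U1[OF b(1) f] by (simp add: act_def)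
    qed
  next
    fix f assume "f \<notin> U1" then show "act u \<chi> f = 0" by (simp add: act_def)
  qed
qed

lemma E_compose: assumes u0: "u $ 0 = 0" shows "E i oo u = 1 + u ^ i"
  unfolding E_def fps_compose_add_distrib fps_compose_power[OF u0, symmetric]
  using u0 by simp

lemma chi_cong:
  assumes chi: "is_character \<chi>" and k: "\<forall>f\<in>U n. \<chi> f = 0" and n1: "1 \<le> n"
    and F: "F \<in> U1" and G: "G \<in> U1" and tr: "tr n F = tr n G"
  shows "\<chi> F = \<chi> G"
proof -
  have G0: "G $ 0 = 1" using G by (rule U_nth0)
  have H: "F * inverse G \<in> U n"
    using tr by (intro cong_inverse_U[OF G0]) (auto simp: tr_eq_iff U_nth0[OF F])
  have eq: "F * inverse G * G = F" using G0 by (rule inverse_cancel)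
  have "\<chi> F = \<chi> (F * inverse G) + \<chi> G" using char_mult[OF chi U_U1[OF n1 H] G] unfolding eq .
  then show ?thesis using k H by simp
qed

lemma uu0: "uu $ 0 = 0" by (simp add: uu_def)
lemma uu1: "uu $ 1 = 1" by (simp add: uu_def)
lemma uu_N: "uu \<in> nottingham" using uu0 uu1 by (simp add: nottingham_def)

lemma one_uu_U1: "1 \<le> i \<Longrightarrow> 1 + uu ^ i \<in> U1"
  unfolding U_def using startsby_zero_power[OF uu0, of i] by simp

lemma case_lemma:
  assumes chi: "is_character \<chi>" and k: "\<forall>f\<in>U 16. \<chi> f = 0" and i: "1 \<le> i"
    and G: "G \<in> U1" and tr: "tr 16 (1 + uu ^ i) = tr 16 G"
  shows "act uu \<chi> (E i) = \<chi> G"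
proof -
  have "act uu \<chi> (E i) = \<chi> (1 + uu ^ i)" using E_U1[OF i] by (simp add: act_def E_compose[OF uu0])
  also have "\<dots> = \<chi> G" by (rule chi_cong[OF chi k _ one_uu_U1[OF i] G tr]) simp
  finally show ?thesis .
qed

lemma big_case:
  assumes chi: "is_character \<chi>" and k: "\<forall>f\<in>U 16. \<chi> f = 0" and i: "16 \<le> i"
  shows "act uu \<chi> (E i) = 0"
proof -
  have "1 + uu ^ i \<in> U 16"
    unfolding U_def using startsby_zero_power[OF uu0, of i] startsby_zero_power_prefix[OF uu0, of i] i
    by auto
  then show ?thesis using E_U1[of i] i k by (simp add: act_def E_compose[OF uu0])
qed

lemma shift_uu: "fps_shift 1 uu = 1 + fps_X^3 + fps_X^4 + fps_X^7 + fps_X^14"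
  by (rule fps_ext) (simp add: uu_def)

lemma four_eq_zero[simp]: "(4::4) = 0" by simp
lemma U1_iff[simp]: "f \<in> U (Suc 0) \<longleftrightarrow> f $ 0 = 1" by (auto simp: U_def)
lemma U1_iff'[simp]: "f \<in> U 1 \<longleftrightarrow> f $ 0 = 1" by (auto simp: U_def)
lemma E_nth0[simp]: "j \<noteq> 0 \<Longrightarrow> E j $ 0 = 1" by (simp add: E_def)

theorem mainTheorem9:
  fixes \<chi> :: "bit fps \<Rightarrow> 4"
  assumes "\<chi> = (\<lambda>f. Zfrak 5 f + 2 * Zfrak 15 f)"
  shows "\<exists>\<psi> b11 b13.
           strictly_equivalent \<chi> \<psi> \<and>
           b11 \<in> {0, 1::4} \<and> b13 \<in> {0, 1::4} \<and>
           \<psi> = (\<lambda>f. Zfrak 5 f + 2 * (b11 * Zfrak 11 f + b13 * Zfrak 13 f + Zfrak 15 f)) \<and>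
           \<psi> (E 11) = 2 \<and> \<psi> \<noteq> \<chi>"
proof -
  have Z5: "is_character (Zfrak 5)" "\<And>i. odd i \<Longrightarrow> Zfrak 5 (E i) = (if i = 5 then 1 else 0)"
    using Zfrak_prop[of 5] by auto
  have Z11: "is_character (Zfrak 11)" "\<And>i. odd i \<Longrightarrow> Zfrak 11 (E i) = (if i = 11 then 1 else 0)"
    using Zfrak_prop[of 11] by auto
  have Z13: "is_character (Zfrak 13)" "\<And>i. odd i \<Longrightarrow> Zfrak 13 (E i) = (if i = 13 then 1 else 0)"
    using Zfrak_prop[of 13] by auto
  have Z15: "is_character (Zfrak 15)" "\<And>i. odd i \<Longrightarrow> Zfrak 15 (E i) = (if i = 15 then 1 else 0)"
    using Zfrak_prop[of 15] by auto
  have chic: "is_character \<chi>" unfolding assms by (intro char_add char_smult Z5 Z15)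
  have chiodd: "\<chi> (E j) = (if j = 5 then 1 else 0) + 2 * (if j = 15 then 1 else 0)" if "odd j" for j
    using that Z5 Z15 unfolding assms by simp
  have chipow: "\<chi> (E (j * 2^k)) = of_nat (2^k) * ((if j = 5 then 1 else 0) + 2 * (if j = 15 then 1 else 0))"
    if "odd j" for j k
  proof -
    have "1 \<le> j" using that by (cases j) auto
    then show ?thesis using char_E_pow2[OF chic, of j k] chiodd[OF that] by simp
  qed
  have kill: "\<forall>f\<in>U 16. \<chi> f = 0"
  proof (rule char_kill[OF chic])
    fix n :: nat assume n: "16 \<le> n"
    obtain j k where jk: "odd j" "n = j * 2^k" using odd_decomp[of n] n by auto
    have c: "\<chi> (E n) = of_nat (2^k) * ((if j = 5 then 1 else 0) + 2 * (if j = 15 then 1 else 0))"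
      using chipow[OF jk(1)] jk by simp
    show "\<chi> (E n) = 0"
    proof (cases "j = 5 \<or> j = 15")
      case False then show ?thesis using c by simp
    next
      case True
      then have "(4::nat) dvd 2^k * (if j = 5 then 1 else 2)"
      proof
        assume j5: "j = 5"
        then have "\<not> k \<le> 1" using n jk by (auto simp: le_Suc_eq) (cases "k = 0"; simp)+
        then have "2 \<le> k" by simp
        then obtain d where "k = 2 + d" using le_Suc_ex by blast
        then have "(2::nat)^k = 2^d * 4" by (simp add: power_add)
        then show ?thesis using j5 by simp
      next
        assume j15: "j = 15"
        then have "k \<noteq> 0" using n jk by (cases "k = 0") auto
        then obtain d where "k = Suc d" by (cases k) auto
        then have "(2::nat)^k * 2 = 2^d * 4" by simp
        then show ?thesis using j15 by simp
      qed
      then have "(of_nat (2^k * (if j = 5 then 1 else 2)) :: 4) = 0" by (rule four_dvd_of_nat)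
      then show ?thesis using c True by auto
    qed
  qed simp
  have T: "\<chi> (E 1) = 0" "\<chi> (E 2) = 0" "\<chi> (E 3) = 0" "\<chi> (E 4) = 0" "\<chi> (E 5) = 1"
     "\<chi> (E 6) = 0" "\<chi> (E 7) = 0" "\<chi> (E 8) = 0" "\<chi> (E 9) = 0" "\<chi> (E 10) = 2"
     "\<chi> (E 11) = 0" "\<chi> (E 12) = 0" "\<chi> (E 13) = 0" "\<chi> (E 14) = 0" "\<chi> (E 15) = 2"
    using chiodd[of 1] chiodd[of 3] chiodd[of 5] chiodd[of 7] chiodd[of 9] chiodd[of 11]
      chiodd[of 13] chiodd[of 15]
      chipow[of 1 1] chipow[of 1 2] chipow[of 3 1] chipow[of 1 3] chipow[of 5 1]
      chipow[of 3 2] chipow[of 7 1]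
    by simp_all
  have T1: "\<chi> (E (Suc 0)) = 0" using T(1) by simp
  define \<psi> where "\<psi> = (\<lambda>f. Zfrak 5 f + 2 * (1 * Zfrak 11 f + 0 * Zfrak 13 f + Zfrak 15 f))"
  have psic: "is_character \<psi>" unfolding \<psi>_def
    by (intro char_add char_smult Z5 Z11 Z13 Z15)
  have psiE: "\<psi> (E i) = (if i = 5 then 1 else 0) + 2 * ((if i = 11 then 1 else 0) + (if i = 15 then 1 else 0))"
    if "odd i" for i
    using that Z5 Z11 Z13 Z15 unfolding \<psi>_def by simp
  have act_eq: "act uu \<chi> = \<psi>"
  proof (rule char_unique[OF act_char[OF uu_N chic] psic])
    fix i :: nat assume i: "odd i"
    show "act uu \<chi> (E i) = \<psi> (E i)"
    proof (cases "16 \<le> i")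
      case True
      then show ?thesis using big_case[OF chic kill True] psiE[OF i] by simp
    next
      case False
      then have "i = 1 \<or> i = 3 \<or> i = 5 \<or> i = 7 \<or> i = 9 \<or> i = 11 \<or> i = 13 \<or> i = 15"
        using i by presburger
      then show ?thesis
      proof (elim disjE)
        assume [simp]: "i = 1"
        have "tr 16 (1 + uu ^ 1) = tr 16 (E 1 * E 4 * E 8 * E 9 * E 10 * E 11 * E 15)"
          by (simp only: tr_simps tr_uu) code_simp
        then have "act uu \<chi> (E 1) = \<chi> (E 1 * E 4 * E 8 * E 9 * E 10 * E 11 * E 15)"
          by (intro case_lemma[OF chic kill]) simp_all
        then show ?thesis using psiE[OF i] by (simp add: char_mult[OF chic] T T1)
      next
        assume [simp]: "i = 3"
        have "tr 16 (1 + uu ^ 3) = tr 16 (E 3 * E 6 * E 7 * E 11 * E 12)"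
          by (simp only: tr_simps tr_uu) code_simp
        then have "act uu \<chi> (E 3) = \<chi> (E 3 * E 6 * E 7 * E 11 * E 12)"
          by (intro case_lemma[OF chic kill]) simp_all
        then show ?thesis using psiE[OF i] by (simp add: char_mult[OF chic] T T1)
      next
        assume [simp]: "i = 5"
        have "tr 16 (1 + uu ^ 5) = tr 16 (E 5 * E 8 * E 9 * E 12 * E 13 * E 14)"
          by (simp only: tr_simps tr_uu) code_simp
        then have "act uu \<chi> (E 5) = \<chi> (E 5 * E 8 * E 9 * E 12 * E 13 * E 14)"
          by (intro case_lemma[OF chic kill]) simp_all
        then show ?thesis using psiE[OF i] by (simp add: char_mult[OF chic] T T1)
      next
        assume [simp]: "i = 7"
        have "tr 16 (1 + uu ^ 7) = tr 16 (E 7 * E 10 * E 11 * E 13 * E 14 * E 15)"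
          by (simp only: tr_simps tr_uu) code_simp
        then have "act uu \<chi> (E 7) = \<chi> (E 7 * E 10 * E 11 * E 13 * E 14 * E 15)"
          by (intro case_lemma[OF chic kill]) simp_all
        then show ?thesis using psiE[OF i] by (simp add: char_mult[OF chic] T T1)
      next
        assume [simp]: "i = 9"
        have "tr 16 (1 + uu ^ 9) = tr 16 (E 9 * E 12 * E 13)"
          by (simp only: tr_simps tr_uu) code_simp
        then have "act uu \<chi> (E 9) = \<chi> (E 9 * E 12 * E 13)"
          by (intro case_lemma[OF chic kill]) simp_all
        then show ?thesis using psiE[OF i] by (simp add: char_mult[OF chic] T T1)
      next
        assume [simp]: "i = 11"
        have "tr 16 (1 + uu ^ 11) = tr 16 (E 11 * E 14 * E 15)"
          by (simp only: tr_simps tr_uu) code_simp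
        then have "act uu \<chi> (E 11) = \<chi> (E 11 * E 14 * E 15)"
          by (intro case_lemma[OF chic kill]) simp_all
        then show ?thesis using psiE[OF i] by (simp add: char_mult[OF chic] T T1)
      next
        assume [simp]: "i = 13"
        have "tr 16 (1 + uu ^ 13) = tr 16 (E 13)"
          by (simp only: tr_simps tr_uu) code_simp
        then have "act uu \<chi> (E 13) = \<chi> (E 13)"
          by (intro case_lemma[OF chic kill]) simp_all
        then show ?thesis using psiE[OF i] by (simp add: T)
      next
        assume [simp]: "i = 15"
        have "tr 16 (1 + uu ^ 15) = tr 16 (E 15)"
          by (simp only: tr_simps tr_uu) code_simp
        then have "act uu \<chi> (E 15) = \<chi> (E 15)"
          by (intro case_lemma[OF chic kill]) simp_all
        then show ?thesis using psiE[OF i] by (simp add: T)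
      qed
    qed
  qed
  have shift0: "\<chi> (fps_shift 1 uu) = 0"
  proof -
    have S1: "fps_shift 1 uu \<in> U1" unfolding U_def by (simp add: uu_def)
    have "\<chi> (fps_shift 1 uu) = \<chi> (E 3 * E 4 * E 14)"
    proof (rule chi_cong[OF chic kill _ S1])
      show "tr 16 (fps_shift 1 uu) = tr 16 (E 3 * E 4 * E 14)"
        by (simp only: shift_uu tr_simps) code_simp
    qed simp_all
    then show ?thesis by (simp add: char_mult[OF chic] T T1)
  qed
  have se: "strictly_equivalent \<chi> \<psi>"
    unfolding strictly_equivalent_def using uu_N shift0 act_eq by blast
  have p11: "\<psi> (E 11) = 2" using psiE[of 11] by simp
  have "\<psi> \<noteq> \<chi>" using p11 T(11) by auto
  then show ?thesis using se p11 unfolding \<psi>_def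
    by (intro exI[of _ \<psi>] exI[of _ "1::4"] exI[of _ "0::4"]) (simp add: \<psi>_def)
qed


end
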